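(* There is no binary self-orthogonal $[46,6,22]$ code.
   Context: A binary linear code $C$ is self-orthogonal if $C\subseteq C^\perp$. *)

theory Defs
  imports Main
begin

text \<open>Binary words of length n are boolean lists of length n; True represents 1 in GF(2).
  Addition in GF(2)^n is pointwise exclusive or.\<close>

definition words :: "nat \<Rightarrow> bool list set" where
  "words n = {x. length x = n}"

definition vadd :: "bool list \<Rightarrow> bool list \<Rightarrow> bool list" where
  "vadd x y = map2 (\<noteq>) x y"

text \<open>A binary linear code of length n: a GF(2)-subspace of GF(2)^n (over GF(2) the only
  scalars are 0 and 1, so a subspace is a nonempty subset closed under addition).\<close>

definition binary_linear_code :: "nat \<Rightarrow> bool list set \<Rightarrow> bool" where
  "binary_linear_code n C \<longleftrightarrow> C \<subseteq> words n \<and> replicate n False \<in> C \<and>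
     (\<forall>x\<in>C. \<forall>y\<in>C. vadd x y \<in> C)"

text \<open>Dimension k of a binary linear code C: C has exactly 2^k elements
  (a k-dimensional GF(2)-space has 2^k vectors).\<close>

definition code_dim :: "bool list set \<Rightarrow> nat \<Rightarrow> bool" where
  "code_dim C k \<longleftrightarrow> finite C \<and> card C = 2 ^ k"

definition hamming_dist :: "bool list \<Rightarrow> bool list \<Rightarrow> nat" where
  "hamming_dist x y = card {i. i < length x \<and> x ! i \<noteq> y ! i}"

definition min_dist :: "bool list set \<Rightarrow> nat" where
  "min_dist C = Min {hamming_dist x y | x y. x \<in> C \<and> y \<in> C \<and> x \<noteq> y}"

definition inner2 :: "bool list \<Rightarrow> bool list \<Rightarrow> bool" where
  "inner2 x y = odd (card {i. i < length x \<and> x ! i \<and> y ! i})"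

definition dual_code :: "nat \<Rightarrow> bool list set \<Rightarrow> bool list set" where
  "dual_code n C = {y \<in> words n. \<forall>x\<in>C. \<not> inner2 x y}"

definition self_orthogonal :: "nat \<Rightarrow> bool list set \<Rightarrow> bool" where
  "self_orthogonal n C \<longleftrightarrow> C \<subseteq> dual_code n C"

end

theory Submission
  imports Defs
begin

definition supp :: "bool list \<Rightarrow> nat set" where
  "supp x = {i. i < length x \<and> x ! i}"

lemma finite_supp[simp]: "finite (supp x)"
  unfolding supp_def by auto

lemma vadd_length[simp]: "length (vadd x y) = min (length x) (length y)"
  unfolding vadd_def by simp

lemma vadd_nth[simp]: "i < length x \<Longrightarrow> i < length y \<Longrightarrow> vadd x y ! i = (x ! i \<noteq> y ! i)"
  unfolding vadd_def by simp

lemma vadd_supp: "length x = length y \<Longrightarrow>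
   supp (vadd x y) = (supp x - supp y) \<union> (supp y - supp x)"
  unfolding supp_def by auto

lemma card_vadd: assumes "length x = length y"
  shows "card (supp (vadd x y)) + 2 * card (supp x \<inter> supp y) = card (supp x) + card (supp y)"
proof -
  have gen: "card A = card (A - B) + card (A \<inter> B)" if "finite A" for A B :: "nat set"
  proof -
    have "A = (A - B) \<union> (A \<inter> B)" by auto
    hence "card A = card ((A - B) \<union> (A \<inter> B))" by simp
    also have "\<dots> = card (A - B) + card (A \<inter> B)" using that by (intro card_Un_disjoint) auto
    finally show ?thesis .
  qed
  have a: "card (supp x) = card (supp x - supp y) + card (supp x \<inter> supp y)" by (rule gen) simp
  have b: "card (supp y) = card (supp y - supp x) + card (supp x \<inter> supp y)"
    using gen[of "supp y" "supp x"] by (simp add: Int_commute)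
  have c: "card (supp (vadd x y)) = card (supp x - supp y) + card (supp y - supp x)"
    using assms by (simp add: vadd_supp) (rule card_Un_disjoint, auto)
  show ?thesis using a b c by simp
qed

lemma vadd_vadd: "length x = length y \<Longrightarrow> vadd x (vadd x y) = y"
  by (rule nth_equalityI) auto

lemma inj_vadd: "inj_on (vadd a) {x. length x = length a}"
  by (rule inj_onI) (metis (mono_tags) mem_Collect_eq vadd_vadd)

lemma supp_zero: "supp (replicate n False) = {}"
  unfolding supp_def by auto

lemma card_filter_sum: "finite A \<Longrightarrow> card {x\<in>A. P x} = (\<Sum>x\<in>A. if P x then 1 else (0::nat))"
  by (simp add: sum.If_cases Int_def)

theorem proposition6p7:
  shows "\<not> (\<exists>C. binary_linear_code 46 C \<and> code_dim C 6 \<and> min_dist C = 22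
                 \<and> self_orthogonal 46 C)"
proof
  assume "\<exists>C. binary_linear_code 46 C \<and> code_dim C 6 \<and> min_dist C = 22 \<and> self_orthogonal 46 C"
  then obtain C where lin: "binary_linear_code 46 C" and dim: "code_dim C 6"
    and md: "min_dist C = 22" and so: "self_orthogonal 46 C" by blast
  define z where "z = replicate 46 False"
  have len: "\<And>x. x \<in> C \<Longrightarrow> length x = 46" using lin unfolding binary_linear_code_def words_def by auto
  have z: "z \<in> C" using lin unfolding binary_linear_code_def z_def by auto
  have cl: "\<And>x y. x \<in> C \<Longrightarrow> y \<in> C \<Longrightarrow> vadd x y \<in> C" using lin unfolding binary_linear_code_def by auto
  have fin: "finite C" and cC: "card C = 64" using dim unfolding code_dim_def by auto
  have orth: "even (card (supp x \<inter> supp y))" if "x \<in> C" "y \<in> C" for x y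
  proof -
    have "y \<in> dual_code 46 C" using so that unfolding self_orthogonal_def by auto
    hence "\<not> inner2 x y" using that unfolding dual_code_def by auto
    moreover have "{i. i < length x \<and> x ! i \<and> y ! i} = supp x \<inter> supp y"
      using len[OF that(1)] len[OF that(2)] unfolding supp_def by auto
    ultimately show ?thesis unfolding inner2_def by simp
  qed
  have ev: "even (card (supp x))" if "x \<in> C" for x using orth[OF that that] by simp
  have w22: "22 \<le> card (supp x)" if "x \<in> C" "x \<noteq> z" for x
  proof -
    have "{hamming_dist x y | x y. x \<in> C \<and> y \<in> C \<and> x \<noteq> y} \<subseteq> (\<lambda>(x,y). hamming_dist x y) ` (C \<times> C)"
      by auto
    hence f: "finite {hamming_dist x y | x y. x \<in> C \<and> y \<in> C \<and> x \<noteq> y}"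
      using fin by (meson finite_SigmaI finite_imageI finite_subset)
    have mem: "hamming_dist x z \<in> {hamming_dist x y | x y. x \<in> C \<and> y \<in> C \<and> x \<noteq> y}"
      apply (rule CollectI) apply (rule exI[of _ x]) apply (rule exI[of _ z]) using that z by simp
    have "Min {hamming_dist x y | x y. x \<in> C \<and> y \<in> C \<and> x \<noteq> y} \<le> hamming_dist x z"
      by (rule Min_le[OF f mem])
    hence "22 \<le> hamming_dist x z" using md unfolding min_dist_def by simp
    moreover have "hamming_dist x z = card (supp x)"
      unfolding hamming_dist_def supp_def z_def using len[OF that(1)]
      by (intro arg_cong[where f=card]) auto
    ultimately show ?thesis by simp
  qed
  define D where "D = {x\<in>C. 4 dvd card (supp x)}"
  have DC: "D \<subseteq> C" unfolding D_def by auto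
  have finD: "finite D" using fin DC finite_subset by blast
  have zD: "z \<in> D" unfolding D_def using z by (simp add: z_def supp_zero)
  have Dcl: "vadd x y \<in> D" if "x \<in> D" "y \<in> D" for x y
  proof -
    have xy: "x \<in> C" "y \<in> C" using that DC by auto
    obtain m where m: "card (supp x \<inter> supp y) = 2 * m" using orth[OF xy] by blast
    have e: "card (supp (vadd x y)) + 4 * m = card (supp x) + card (supp y)"
      using card_vadd[of x y] len[OF xy(1)] len[OF xy(2)] m by simp
    have "4 dvd card (supp x)" "4 dvd card (supp y)" using that unfolding D_def by auto
    hence "4 dvd card (supp (vadd x y))" using e by presburger
    thus ?thesis unfolding D_def using cl[OF xy] by simp
  qed
  have "card (C - D) \<le> card D"
  proof (cases "C - D = {}")
    case True show ?thesis by (subst True) simp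
  next
    case False
    then obtain a where a: "a \<in> C" "a \<notin> D" by blast
    have "vadd a ` (C - D) \<subseteq> D"
    proof
      fix y assume "y \<in> vadd a ` (C - D)"
      then obtain x where x: "x \<in> C" "x \<notin> D" "y = vadd a x" by blast
      obtain m where m: "card (supp a \<inter> supp x) = 2 * m" using orth[OF a(1) x(1)] by blast
      have e: "card (supp (vadd a x)) + 4 * m = card (supp a) + card (supp x)"
        using card_vadd[of a x] len[OF a(1)] len[OF x(1)] m by simp
      have "\<not> 4 dvd card (supp a)" "\<not> 4 dvd card (supp x)" using a x unfolding D_def by auto
      moreover have "even (card (supp a))" "even (card (supp x))" using ev a x by auto
      ultimately have "4 dvd card (supp (vadd a x))" using e by presburger
      thus "y \<in> D" unfolding D_def using cl[OF a(1) x(1)] x by simp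
    qed
    moreover have "inj_on (vadd a) (C - D)"
      by (rule inj_on_subset[OF inj_vadd[of a]]) (use len a in auto)
    ultimately show ?thesis using finD by (metis card_image card_mono)
  qed
  moreover have "card C = card D + card (C - D)"
    using DC fin by (metis card_Diff_subset finD le_add_diff_inverse card_mono)
  ultimately have D32: "32 \<le> card D" using cC by linarith
  have half: "2 * card {x\<in>D. x ! i} \<le> card D" if "i < 46" for i
  proof -
    have u: "card {x\<in>D. x ! i} + card {x\<in>D. \<not> x ! i} = card D"
      using finD by (subst card_Un_disjoint[symmetric]) (auto intro: arg_cong[where f=card])
    have "card {x\<in>D. x ! i} \<le> card {x\<in>D. \<not> x ! i}"
    proof (cases "{x\<in>D. x ! i} = {}")
      case True show ?thesis by (subst True) simp
    next
      case False
      then obtain b where b: "b \<in> D" "b ! i" by blast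
      have bC: "b \<in> C" using b DC by auto
      have "vadd b ` {x\<in>D. x ! i} \<subseteq> {x\<in>D. \<not> x ! i}"
      proof
        fix y assume "y \<in> vadd b ` {x\<in>D. x ! i}"
        then obtain x where x: "x \<in> D" "x ! i" "y = vadd b x" by blast
        have xC: "x \<in> C" using x DC by auto
        show "y \<in> {x\<in>D. \<not> x ! i}"
          using x b Dcl len[OF bC] len[OF xC] that by simp
      qed
      moreover have "inj_on (vadd b) {x\<in>D. x ! i}"
        by (rule inj_on_subset[OF inj_vadd[of b]]) (use len DC bC in auto)
      ultimately show ?thesis using finD by (metis (no_types, lifting) card_image card_mono finite_subset mem_Collect_eq subsetI)
    qed
    thus ?thesis using u by linarith
  qed
  have sw: "card (supp x) = (\<Sum>i<46. if x ! i then 1 else (0::nat))" if "x \<in> D" for x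
  proof -
    have "supp x = {i\<in>{..<46}. x ! i}" unfolding supp_def using len that DC by auto
    thus ?thesis by (simp only:) (rule card_filter_sum, simp)
  qed
  have "(\<Sum>x\<in>D. card (supp x)) = (\<Sum>x\<in>D. \<Sum>i<46. if x ! i then 1 else (0::nat))"
    using sw by (rule sum.cong[OF refl])
  also have "\<dots> = (\<Sum>i<46. \<Sum>x\<in>D. if x ! i then 1 else (0::nat))" by (rule sum.swap)
  also have "\<dots> = (\<Sum>i<46. card {x\<in>D. x ! i})" using finD by (simp add: card_filter_sum)
  finally have sumeq: "(\<Sum>x\<in>D. card (supp x)) = (\<Sum>i<46. card {x\<in>D. x ! i})" .
  have "2 * (\<Sum>i<46. card {x\<in>D. x ! i}) = (\<Sum>i<46. 2 * card {x\<in>D. x ! i})"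
    by (simp add: sum_distrib_left)
  also have "\<dots> \<le> (\<Sum>i<(46::nat). card D)" by (rule sum_mono) (use half in auto)
  finally have upper: "2 * (\<Sum>x\<in>D. card (supp x)) \<le> 46 * card D" using sumeq by simp
  have w24: "24 \<le> card (supp x)" if "x \<in> D - {z}" for x
  proof -
    have "22 \<le> card (supp x)" "4 dvd card (supp x)" using w22 that DC unfolding D_def by auto
    thus ?thesis by presburger
  qed
  have "card (D - {z}) * 24 \<le> (\<Sum>x\<in>D - {z}. card (supp x))"
    using sum_bounded_below[of "D - {z}" 24 "\<lambda>x. card (supp x)"] w24 by simp
  also have "\<dots> = (\<Sum>x\<in>D. card (supp x))"
    using finD zD by (simp add: sum_diff1_nat z_def supp_zero)
  finally have lower: "(card D - 1) * 24 \<le> (\<Sum>x\<in>D. card (supp x))" using zD finD by simp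
  show False using lower upper D32 by linarith
qed

end
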